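(* Let $A$ be a synaptic algebra and $p,q\in P$. Let $r_p:=p\wedge(p^{\perp}\vee q)\wedge(p^{\perp}\vee q^{\perp})$, $r_{p^{\perp}}:=p^{\perp}\wedge(p\vee q)\wedge(p\vee q^{\perp})$, $r_q:=q\wedge(p\vee q^{\perp})\wedge(p^{\perp}\vee q^{\perp})$, $r_{q^{\perp}}:=q^{\perp}\wedge(p\vee q)\wedge(p^{\perp}\vee q)$, and $r:=[p,q]:=(p\vee q)\wedge(p\vee q^{\perp})\wedge(p^{\perp}\vee q)\wedge(p^{\perp}\vee q^{\perp})$ (so $r=r_p\oplus r_{p^{\perp}}=r_q\oplus r_{q^{\perp}}$). Then: (i) $pCq$ iff $r=0$; (ii) $pr_p=r_pp=r_p$, $pr_{p^{\perp}}=r_{p^{\perp}}p=0$, and $pr=rp=p\wedge r=r_p$; (iii) $p^{\perp}r_p=r_pp^{\perp}=0$, $p^{\perp}r_{p^{\perp}}=r_{p^{\perp}}p^{\perp}=r_{p^{\perp}}$, and $p^{\perp}r=rp^{\perp}=p^{\perp}\wedge r=r_{p^{\perp}}$; (iv) $qr_q=r_qq=r_q$, $qr_{q^{\perp}}=r_{q^{\perp}}q=0$, and $qr=rq=q\wedge r=r_q$; (v) $q^{\perp}r_q=r_qq^{\perp}=0$, $q^{\perp}r_{q^{\perp}}=r_{q^{\perp}}q^{\perp}=r_{q^{\perp}}$, and $q^{\perp}r=rq^{\perp}=q^{\perp}\wedge r=r_{q^{\perp}}$; (vi) $p,p^{\perp},q,q^{\perp}$ commute with $r$; (vii) $r_p$,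 $r_{p^{\perp}}$, $r_p^{\perp}$, $r_q$, $r_{q^{\perp}}$, $r_q^{\perp}$ commute with $r$; (viii) $r_p=p\wedge r=pr=rp$, $r_{p^{\perp}}=p^{\perp}\wedge r=p^{\perp}r=rp^{\perp}$, $r_q=q\wedge r=qr=rq$, and $r_{q^{\perp}}=q^{\perp}\wedge r=q^{\perp}r=rq^{\perp}$.
   Context: Synaptic algebra (Foulis): $R$ is a real linear associative algebra with unit $1$, and $A\subseteq R$ is a real linear subspace with $1\in A$. For $a,b\in A$ write $aCb$ iff $ab=ba$; $C(a):=\{b\in A: aCb\}$; $CC(a):=\{b\in A: bCd \text{ for all } d\in C(a)\}$. $A$ is a synaptic algebra with enveloping algebra $R$ iff: (SA1) $A$ is a partially ordered archimedean real linear space with positive cone $A^+$, $1$ is an order unit, $\|\cdot\|$ the order-unit norm; (SA2) $a\in A\Rightarrow a^2\in A^+$; (SA3) $a,b\in A^+\Rightarrow aba\in A^+$; (SA4) if $a\in A$, $b\in A^+$, $aba=0$ then $ab=ba=0$; (SA5) if $a\in A^+$ there is $b\in A^+\cap CC(a)$ with $b^2=a$; (SA6) for $a\in A$ there is $p=p^2\in A$ with $ab=0\Leftrightarrow pb=0$ for all $b\in A$; (SA7) if $1\le a$ there is $b\in A$ with $ab=ba=1$; (SA8) if $a,b\in A$, $a_1\le a_2\le\cdots$ are pairwise commuting elements of $C(b)$ with $\|a-a_n\|\to0$, then $a\in C(b)$. $A$ is nondegenerate. $P:=\{p\in A:p=p^2\}$ with the order inherited from $A$ is an orthomodular lattice with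 orthocomplement $p^{\perp}:=1-p$, meet $\wedge$, join $\vee$; $\oplus$ denotes the sum of orthogonal projections. *)

theory Defs
  imports Complex_Main
begin

text \<open>The enveloping algebra R is the ambient type
 'a :: real_algebra_1 (a real linear associative algebra with unit 1, 0 \<noteq> 1).
 A synaptic algebra is given by the carrier A \<subseteq> R together with its positive cone Apos.\<close>

definition sa_le :: "'a::real_algebra_1 set \<Rightarrow> 'a \<Rightarrow> 'a \<Rightarrow> bool" where
  "sa_le Apos a b \<longleftrightarrow> b - a \<in> Apos"

definition ou_norm :: "'a::real_algebra_1 set \<Rightarrow> 'a \<Rightarrow> real" where
  "ou_norm Apos a = Inf {l::real. 0 \<le> l \<and> sa_le Apos (- (l *\<^sub>R 1)) a \<and> sa_le Apos a (l *\<^sub>R 1)}"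

definition commutant :: "'a::real_algebra_1 set \<Rightarrow> 'a \<Rightarrow> 'a set" where
  "commutant A a = {b \<in> A. a * b = b * a}"

definition bicommutant :: "'a::real_algebra_1 set \<Rightarrow> 'a \<Rightarrow> 'a set" where
  "bicommutant A a = {b \<in> A. \<forall>d \<in> commutant A a. b * d = d * b}"

definition synaptic_algebra :: "'a::real_algebra_1 set \<Rightarrow> 'a set \<Rightarrow> bool" where
  "synaptic_algebra A Apos \<longleftrightarrow>
     \<comment> \<open>A is a real linear subspace of R containing 1\<close>
     0 \<in> A \<and> 1 \<in> A \<and> (\<forall>a\<in>A. \<forall>b\<in>A. a + b \<in> A) \<and> (\<forall>c::real. \<forall>a\<in>A. c *\<^sub>R a \<in> A) \<and>
     \<comment> \<open>SA1: partially ordered (positive cone), archimedean, 1 an order unit\<close>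
     Apos \<subseteq> A \<and> 0 \<in> Apos \<and> (\<forall>a\<in>Apos. \<forall>b\<in>Apos. a + b \<in> Apos) \<and>
     (\<forall>c::real. \<forall>a\<in>Apos. 0 \<le> c \<longrightarrow> c *\<^sub>R a \<in> Apos) \<and>
     (\<forall>a\<in>Apos. - a \<in> Apos \<longrightarrow> a = 0) \<and>
     (\<forall>a\<in>A. \<forall>b\<in>A. (\<forall>n::nat. sa_le Apos (of_nat n *\<^sub>R a) b) \<longrightarrow> sa_le Apos a 0) \<and>
     (\<forall>a\<in>A. \<exists>n::nat. sa_le Apos a (of_nat n *\<^sub>R 1)) \<and>
     \<comment> \<open>SA2\<close>
     (\<forall>a\<in>A. a * a \<in> Apos) \<and>
     \<comment> \<open>SA3\<close>
     (\<forall>a\<in>Apos. \<forall>b\<in>Apos. a * b * a \<in> Apos) \<and>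
     \<comment> \<open>SA4\<close>
     (\<forall>a\<in>A. \<forall>b\<in>Apos. a * b * a = 0 \<longrightarrow> a * b = 0 \<and> b * a = 0) \<and>
     \<comment> \<open>SA5\<close>
     (\<forall>a\<in>Apos. \<exists>b\<in>Apos \<inter> bicommutant A a. b * b = a) \<and>
     \<comment> \<open>SA6\<close>
     (\<forall>a\<in>A. \<exists>p\<in>A. p * p = p \<and> (\<forall>b\<in>A. a * b = 0 \<longleftrightarrow> p * b = 0)) \<and>
     \<comment> \<open>SA7\<close>
     (\<forall>a\<in>A. sa_le Apos 1 a \<longrightarrow> (\<exists>b\<in>A. a * b = 1 \<and> b * a = 1)) \<and>
     \<comment> \<open>SA8\<close>
     (\<forall>a\<in>A. \<forall>b\<in>A. \<forall>s::nat \<Rightarrow> 'a.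
        (\<forall>n. s n \<in> commutant A b) \<and> (\<forall>m n. s m * s n = s n * s m) \<and>
        (\<forall>n. sa_le Apos (s n) (s (Suc n))) \<and>
        ((\<lambda>n. ou_norm Apos (a - s n)) \<longlonglongrightarrow> 0)
        \<longrightarrow> a \<in> commutant A b)"

definition projections :: "'a::real_algebra_1 set \<Rightarrow> 'a set" where
  "projections A = {p \<in> A. p * p = p}"

definition perp :: "'a::real_algebra_1 \<Rightarrow> 'a" where
  "perp p = 1 - p"

definition pmeet :: "'a::real_algebra_1 set \<Rightarrow> 'a set \<Rightarrow> 'a \<Rightarrow> 'a \<Rightarrow> 'a" where
  "pmeet A Apos p q = (THE r. r \<in> projections A \<and> sa_le Apos r p \<and> sa_le Apos r q \<and>
      (\<forall>s\<in>projections A. sa_le Apos s p \<and> sa_le Apos s q \<longrightarrow> sa_le Apos s r))"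

definition pjoin :: "'a::real_algebra_1 set \<Rightarrow> 'a set \<Rightarrow> 'a \<Rightarrow> 'a \<Rightarrow> 'a" where
  "pjoin A Apos p q = (THE r. r \<in> projections A \<and> sa_le Apos p r \<and> sa_le Apos q r \<and>
      (\<forall>s\<in>projections A. sa_le Apos p s \<and> sa_le Apos q s \<longrightarrow> sa_le Apos r s))"

end

theory Submission
  imports Defs
begin


locale sa =
  fixes A Apos :: "'a::real_algebra_1 set"
  assumes SA: "synaptic_algebra A Apos"
begin

abbreviation "P \<equiv> projections A"
abbreviation "le \<equiv> sa_le Apos"

lemma A1: "1 \<in> A" using SA unfolding synaptic_algebra_def by simp
lemma Aadd: "a \<in> A \<Longrightarrow> b \<in> A \<Longrightarrow> a + b \<in> A" using SA unfolding synaptic_algebra_def by simp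
lemma Ascale: "a \<in> A \<Longrightarrow> c *\<^sub>R a \<in> A" using SA unfolding synaptic_algebra_def by simp
lemma Aneg: "a \<in> A \<Longrightarrow> - a \<in> A" using Ascale[of a "-1"] by simp
lemma Adiff: "a \<in> A \<Longrightarrow> b \<in> A \<Longrightarrow> a - b \<in> A"
  using Aadd[of a "-b"] Aneg[of b] by simp
lemma Apos_A: "a \<in> Apos \<Longrightarrow> a \<in> A" using SA unfolding synaptic_algebra_def by (simp add: subset_iff)
lemma pos_add: "a \<in> Apos \<Longrightarrow> b \<in> Apos \<Longrightarrow> a + b \<in> Apos" using SA unfolding synaptic_algebra_def by simp
lemma pointed: "a \<in> Apos \<Longrightarrow> - a \<in> Apos \<Longrightarrow> a = 0" using SA unfolding synaptic_algebra_def by simp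
lemma SA2: "a \<in> A \<Longrightarrow> a * a \<in> Apos" using SA unfolding synaptic_algebra_def by simp
lemma SA3: "a \<in> Apos \<Longrightarrow> b \<in> Apos \<Longrightarrow> a * b * a \<in> Apos" using SA unfolding synaptic_algebra_def by simp
lemma SA4: "a \<in> A \<Longrightarrow> b \<in> Apos \<Longrightarrow> a * b * a = 0 \<Longrightarrow> a * b = 0 \<and> b * a = 0"
  using SA unfolding synaptic_algebra_def by simp
lemma SA6: "a \<in> A \<Longrightarrow> \<exists>p\<in>A. p * p = p \<and> (\<forall>b\<in>A. a * b = 0 \<longleftrightarrow> p * b = 0)"
  using SA unfolding synaptic_algebra_def by simp

lemma Pin: "p \<in> P \<longleftrightarrow> p \<in> A \<and> p * p = p" unfolding projections_def by blast

lemma P_pos: "p \<in> P \<Longrightarrow> p \<in> Apos" using SA2 Pin by metis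

lemma perp_P: "p \<in> P \<Longrightarrow> perp p \<in> P"
  unfolding Pin perp_def using A1 Adiff by (auto simp: algebra_simps)

lemma perp_perp[simp]: "perp (perp x) = x" unfolding perp_def by simp

lemma le_perp: "le (perp y) (perp x) \<longleftrightarrow> le x y"
  unfolding sa_le_def perp_def by simp

lemma le_antisym: "le x y \<Longrightarrow> le y x \<Longrightarrow> x = y"
  unfolding sa_le_def using pointed[of "y - x"] by simp

lemma le_trans: "le x y \<Longrightarrow> le y z \<Longrightarrow> le x z"
  unfolding sa_le_def using pos_add[of "z - y" "y - x"] by simp

lemma le_iff: assumes p: "p \<in> P" and q: "q \<in> P"
  shows "le p q \<longleftrightarrow> p * q = p \<and> q * p = p"
proof
  assume h: "le p q"
  define u where "u = 1 - q"
  have uP: "u \<in> Apos" using P_pos perp_P[OF q] unfolding u_def perp_def by simp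
  have uA: "u \<in> A" using Apos_A uP by blast
  have pP: "p \<in> Apos" using P_pos p by blast
  have qq: "q * q = q" using q Pin by blast
  have uq: "u * q = 0" unfolding u_def using qq by (simp add: algebra_simps)
  have "u * (q - p) * u \<in> Apos" using SA3[OF uP] h unfolding sa_le_def by blast
  moreover have "u * (q - p) * u = - (u * p * u)" using uq by (simp add: algebra_simps)
  ultimately have "u * p * u = 0" using pointed SA3[OF uP pP] by metis
  then have "u * p = 0 \<and> p * u = 0" using SA4[OF uA pP] by blast
  then show "p * q = p \<and> q * p = p" unfolding u_def by (simp add: algebra_simps)
next
  assume h: "p * q = p \<and> q * p = p"
  have pp: "p * p = p" and qq: "q * q = q" using p q Pin by auto
  have "(q - p) * (q - p) = q - p" using h pp qq by (simp add: algebra_simps)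
  moreover have "(q - p) * (q - p) \<in> Apos" using SA2 Adiff p q Pin by metis
  ultimately show "le p q" unfolding sa_le_def by simp
qed

lemma join_exists: assumes e: "e \<in> P" and f: "f \<in> P"
  shows "\<exists>g\<in>P. le e g \<and> le f g \<and> (\<forall>s\<in>P. le e s \<and> le f s \<longrightarrow> le g s)"
proof -
  have eA: "e \<in> A" and fA: "f \<in> A" and ee: "e * e = e" and ff: "f * f = f" using e f Pin by auto
  have ePos: "e \<in> Apos" and fPos: "f \<in> Apos" using e f P_pos by auto
  obtain g where gA: "g \<in> A" and gg: "g * g = g" and gchar: "\<forall>b\<in>A. (e + f) * b = 0 \<longleftrightarrow> g * b = 0"
    using SA6[OF Aadd[OF eA fA]] by blast
  have gP: "g \<in> P" using gA gg Pin by blast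
  have ugA: "1 - g \<in> A" using Adiff A1 gA by blast
  have ugPos: "1 - g \<in> Apos" using P_pos perp_P[OF gP] unfolding perp_def by simp
  have "g * (1 - g) = 0" using gg by (simp add: algebra_simps)
  then have "(e + f) * (1 - g) = 0" using gchar ugA by blast
  then have "(1 - g) * (e + f) * (1 - g) = 0" by (simp add: mult.assoc)
  then have sum0: "(1 - g) * e * (1 - g) + (1 - g) * f * (1 - g) = 0" by (simp add: algebra_simps)
  have x1: "(1 - g) * e * (1 - g) \<in> Apos" using SA3[OF ugPos ePos] .
  have x2: "(1 - g) * f * (1 - g) \<in> Apos" using SA3[OF ugPos fPos] .
  have "- ((1 - g) * e * (1 - g)) = (1 - g) * f * (1 - g)" using sum0 by (metis add.commute add_eq_0_iff)
  then have z1: "(1 - g) * e * (1 - g) = 0" using pointed x1 x2 by metis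
  then have "(1 - g) * f * (1 - g) = 0" using sum0 by simp
  then have "(1 - g) * f = 0 \<and> f * (1 - g) = 0" using SA4[OF ugA fPos] by blast
  then have fg: "le f g" using le_iff[OF f gP] by (simp add: algebra_simps)
  have "(1 - g) * e = 0 \<and> e * (1 - g) = 0" using SA4[OF ugA ePos] z1 by blast
  then have eg: "le e g" using le_iff[OF e gP] by (simp add: algebra_simps)
  have least: "le g s" if s: "s \<in> P" and es: "le e s" and fs: "le f s" for s
  proof -
    have sA: "s \<in> A" using s Pin by blast
    have usA: "1 - s \<in> A" using Adiff A1 sA by blast
    have usPos: "1 - s \<in> Apos" using P_pos perp_P[OF s] unfolding perp_def by simp
    have "e * s = e" "f * s = f" using es fs le_iff e f s by auto
    then have "(e + f) * (1 - s) = 0" by (simp add: algebra_simps)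
    then have "g * (1 - s) = 0" using gchar usA by blast
    then have "(1 - s) * g * (1 - s) = 0" by (simp add: mult.assoc)
    then have "(1 - s) * g = 0 \<and> g * (1 - s) = 0" using SA4[OF usA P_pos[OF gP]] by blast
    then show ?thesis using le_iff[OF gP s] by (simp add: algebra_simps)
  qed
  show ?thesis using gP eg fg least by blast
qed

lemma join_char: assumes "g \<in> P" "le e g" "le f g" "\<forall>s\<in>P. le e s \<and> le f s \<longrightarrow> le g s"
  shows "pjoin A Apos e f = g"
  unfolding pjoin_def
  apply (rule the_equality)
  using assms apply blast
  using assms le_antisym by blast

lemma join_props: assumes e: "e \<in> P" and f: "f \<in> P"
  shows "pjoin A Apos e f \<in> P \<and> le e (pjoin A Apos e f) \<and> le f (pjoin A Apos e f) \<and>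
     (\<forall>s\<in>P. le e s \<and> le f s \<longrightarrow> le (pjoin A Apos e f) s)"
proof -
  obtain g where "g\<in>P" "le e g \<and> le f g \<and> (\<forall>s\<in>P. le e s \<and> le f s \<longrightarrow> le g s)"
    using join_exists[OF e f] by blast
  moreover then have "pjoin A Apos e f = g" using join_char by blast
  ultimately show ?thesis by simp
qed

lemma meet_char: assumes "g \<in> P" "le g e" "le g f" "\<forall>s\<in>P. le s e \<and> le s f \<longrightarrow> le s g"
  shows "pmeet A Apos e f = g"
  unfolding pmeet_def
  apply (rule the_equality)
  using assms apply blast
  using assms le_antisym by blast

lemma meet_perp: assumes e: "e \<in> P" and f: "f \<in> P"
  shows "pmeet A Apos e f = perp (pjoin A Apos (perp e) (perp f))"
proof (rule meet_char)
  let ?J = "pjoin A Apos (perp e) (perp f)"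
  have J: "?J \<in> P \<and> le (perp e) ?J \<and> le (perp f) ?J \<and> (\<forall>s\<in>P. le (perp e) s \<and> le (perp f) s \<longrightarrow> le ?J s)"
    using join_props[OF perp_P[OF e] perp_P[OF f]] .
  show "perp ?J \<in> P" using J perp_P by blast
  show "le (perp ?J) e" using J le_perp[of ?J "perp e"] by simp
  show "le (perp ?J) f" using J le_perp[of ?J "perp f"] by simp
  show "\<forall>s\<in>P. le s e \<and> le s f \<longrightarrow> le s (perp ?J)"
  proof (intro ballI impI)
    fix s assume s: "s \<in> P" and h: "le s e \<and> le s f"
    have "le (perp e) (perp s)" "le (perp f) (perp s)" using h le_perp by auto
    then have "le ?J (perp s)" using J perp_P[OF s] by blast
    then show "le s (perp ?J)" using le_perp[of "perp s" ?J] by simp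
  qed
qed

lemma meet_P: assumes e: "e \<in> P" and f: "f \<in> P" shows "pmeet A Apos e f \<in> P"
  using meet_perp[OF e f] join_props[OF perp_P[OF e] perp_P[OF f]] perp_P by simp

lemma meet_le1: assumes e: "e \<in> P" and f: "f \<in> P" shows "le (pmeet A Apos e f) e"
  using meet_perp[OF e f] join_props[OF perp_P[OF e] perp_P[OF f]]
    le_perp[of "pjoin A Apos (perp e) (perp f)" "perp e"] by simp

lemma meet_le2: assumes e: "e \<in> P" and f: "f \<in> P" shows "le (pmeet A Apos e f) f"
  using meet_perp[OF e f] join_props[OF perp_P[OF e] perp_P[OF f]]
    le_perp[of "pjoin A Apos (perp e) (perp f)" "perp f"] by simp

lemma join_perp: assumes e: "e \<in> P" and f: "f \<in> P"
  shows "pjoin A Apos e f = perp (pmeet A Apos (perp e) (perp f))"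
  using meet_perp[OF perp_P[OF e] perp_P[OF f]] by simp

lemma meet_comm_prod: assumes e: "e \<in> P" and f: "f \<in> P" and c: "e * f = f * e"
  shows "pmeet A Apos e f = e * f"
proof (rule meet_char)
  have eA: "e \<in> A" and ee: "e * e = e" and ff: "f * f = f" using e f Pin by auto
  have efe: "e * f * e = e * f"
  proof -
    have "e * f * e = e * (f * e)" by (simp add: mult.assoc)
    also have "\<dots> = (e * e) * f" using c by (simp add: mult.assoc)
    finally show ?thesis using ee by simp
  qed
  have eef: "e * (e * f) = e * f" using ee by (simp add: mult.assoc[symmetric])
  have eff': "e * f * f = e * f" using ff by (simp add: mult.assoc)
  have fef: "f * (e * f) = e * f"
  proof -
    have "f * (e * f) = (f * e) * f" by (simp add: mult.assoc)
    also have "\<dots> = e * f" using c eff' by simp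
    finally show ?thesis .
  qed
  have "e * f * e \<in> Apos" using SA3 P_pos e f by blast
  then have efA: "e * f \<in> A" using Apos_A efe by simp
  have eff: "e * f * (e * f) = e * f" using efe eff' by (metis mult.assoc)
  show efP: "e * f \<in> P" using efA eff Pin by blast
  show "le (e * f) e" using le_iff[OF efP e] efe eef by simp
  show "le (e * f) f" using le_iff[OF efP f] eff' fef by simp
  show "\<forall>s\<in>P. le s e \<and> le s f \<longrightarrow> le s (e * f)"
  proof (intro ballI impI)
    fix s assume s: "s \<in> P" and h: "le s e \<and> le s f"
    have h1: "s * e = s" "e * s = s" "s * f = s" "f * s = s" using h le_iff s e f by auto
    have "s * (e * f) = s" using h1 by (simp add: mult.assoc[symmetric])
    moreover have "e * f * s = s" using h1 by (simp add: mult.assoc)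
    ultimately show "le s (e * f)" using le_iff[OF s efP] by simp
  qed
qed

lemma orth1: fixes x y z :: 'a assumes "x * y = x" "(1 - y) * z = z" "y * y = y" shows "x * z = 0"
proof -
  have "x * z = (x * y) * ((1 - y) * z)" using assms by simp
  also have "\<dots> = x * (y * (1 - y)) * z" by (simp only: mult.assoc)
  also have "\<dots> = 0" using assms(3) by (simp add: algebra_simps)
  finally show ?thesis .
qed

lemma orth2: fixes x y z :: 'a assumes "y * x = x" "z * (1 - y) = z" "y * y = y" shows "z * x = 0"
proof -
  have "z * x = (z * (1 - y)) * (y * x)" using assms by simp
  also have "\<dots> = z * ((1 - y) * y) * x" by (simp only: mult.assoc)
  also have "\<dots> = 0" using assms(3) by (simp add: algebra_simps)
  finally show ?thesis .
qed

lemma meet_calc: assumes "e \<in> P" "f \<in> P" "e * f = g" "f * e = g"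
  shows "pmeet A Apos e f = g \<and> g \<in> P"
  using meet_comm_prod[OF assms(1,2)] assms meet_P[OF assms(1,2)] by simp

end

theorem theorem3p8:
  fixes A Apos :: "'a::real_algebra_1 set" and p q :: 'a
  assumes SA: "synaptic_algebra A Apos"
    and hp: "p \<in> projections A" and hq: "q \<in> projections A"
  defines "M \<equiv> pmeet A Apos" and "J \<equiv> pjoin A Apos"
  defines "rp \<equiv> M (M p (J (perp p) q)) (J (perp p) (perp q))"
    and "rpp \<equiv> M (M (perp p) (J p q)) (J p (perp q))"
    and "rq \<equiv> M (M q (J p (perp q))) (J (perp p) (perp q))"
    and "rqp \<equiv> M (M (perp q) (J p q)) (J (perp p) q)"
    and "r \<equiv> M (M (M (J p q) (J p (perp q))) (J (perp p) q)) (J (perp p) (perp q))"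
  shows
    \<comment> \<open>parenthetical: r = r_p \<oplus> r_p' = r_q \<oplus> r_q'\<close>
    "(r = rp + rpp \<and> rp * rpp = 0 \<and> r = rq + rqp \<and> rq * rqp = 0) \<and>
     \<comment> \<open>(i)\<close>
     (p * q = q * p \<longleftrightarrow> r = 0) \<and>
     \<comment> \<open>(ii)\<close>
     (p * rp = rp \<and> rp * p = rp \<and> p * rpp = 0 \<and> rpp * p = 0 \<and>
      p * r = rp \<and> r * p = rp \<and> M p r = rp) \<and>
     \<comment> \<open>(iii)\<close>
     (perp p * rp = 0 \<and> rp * perp p = 0 \<and> perp p * rpp = rpp \<and> rpp * perp p = rpp \<and>
      perp p * r = rpp \<and> r * perp p = rpp \<and> M (perp p) r = rpp) \<and>
     \<comment> \<open>(iv)\<close>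
     (q * rq = rq \<and> rq * q = rq \<and> q * rqp = 0 \<and> rqp * q = 0 \<and>
      q * r = rq \<and> r * q = rq \<and> M q r = rq) \<and>
     \<comment> \<open>(v)\<close>
     (perp q * rq = 0 \<and> rq * perp q = 0 \<and> perp q * rqp = rqp \<and> rqp * perp q = rqp \<and>
      perp q * r = rqp \<and> r * perp q = rqp \<and> M (perp q) r = rqp) \<and>
     \<comment> \<open>(vi)\<close>
     (p * r = r * p \<and> perp p * r = r * perp p \<and> q * r = r * q \<and> perp q * r = r * perp q) \<and>
     \<comment> \<open>(vii)\<close>
     (rp * r = r * rp \<and> rpp * r = r * rpp \<and> perp rp * r = r * perp rp \<and>
      rq * r = r * rq \<and> rqp * r = r * rqp \<and> perp rq * r = r * perp rq) \<and>
     \<comment> \<open>(viii)\<close>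
     (rp = M p r \<and> rp = p * r \<and> rp = r * p \<and>
      rpp = M (perp p) r \<and> rpp = perp p * r \<and> rpp = r * perp p \<and>
      rq = M q r \<and> rq = q * r \<and> rq = r * q \<and>
      rqp = M (perp q) r \<and> rqp = perp q * r \<and> rqp = r * perp q)"
proof -
  interpret sa A Apos by (rule sa.intro) (rule SA)
  have pp: "p * p = p" and qq: "q * q = q" using hp hq Pin by auto
  have hp': "perp p \<in> P" and hq': "perp q \<in> P" using hp hq perp_P by auto
  define e1 where "e1 = M p q"
  define e2 where "e2 = M p (perp q)"
  define f1 where "f1 = M (perp p) q"
  define f2 where "f2 = M (perp p) (perp q)"
  have e1P: "e1 \<in> P" and e2P: "e2 \<in> P" and f1P: "f1 \<in> P" and f2P: "f2 \<in> P"
    unfolding e1_def e2_def f1_def f2_def M_def using meet_P hp hq hp' hq' by auto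
  have e1e1: "e1 * e1 = e1" and e2e2: "e2 * e2 = e2" and f1f1: "f1 * f1 = f1" and f2f2: "f2 * f2 = f2"
    using e1P e2P f1P f2P Pin by auto
  have l1: "e1 * p = e1 \<and> p * e1 = e1" using le_iff[OF e1P hp] meet_le1[OF hp hq] unfolding e1_def M_def by simp
  have l2: "e1 * q = e1 \<and> q * e1 = e1" using le_iff[OF e1P hq] meet_le2[OF hp hq] unfolding e1_def M_def by simp
  have l3: "e2 * p = e2 \<and> p * e2 = e2" using le_iff[OF e2P hp] meet_le1[OF hp hq'] unfolding e2_def M_def by simp
  have l4: "e2 * (1 - q) = e2 \<and> (1 - q) * e2 = e2" using le_iff[OF e2P hq'] meet_le2[OF hp hq'] unfolding e2_def M_def perp_def by simp
  have l5: "f1 * (1 - p) = f1 \<and> (1 - p) * f1 = f1" using le_iff[OF f1P hp'] meet_le1[OF hp' hq] unfolding f1_def M_def perp_def by simp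
  have l6: "f1 * q = f1 \<and> q * f1 = f1" using le_iff[OF f1P hq] meet_le2[OF hp' hq] unfolding f1_def M_def by simp
  have l7: "f2 * (1 - p) = f2 \<and> (1 - p) * f2 = f2" using le_iff[OF f2P hp'] meet_le1[OF hp' hq'] unfolding f2_def M_def perp_def by simp
  have l8: "f2 * (1 - q) = f2 \<and> (1 - q) * f2 = f2" using le_iff[OF f2P hq'] meet_le2[OF hp' hq'] unfolding f2_def M_def perp_def by simp
  have z1: "e2 * q = 0 \<and> q * e2 = 0" using l4 by (simp add: algebra_simps)
  have z2: "f1 * p = 0 \<and> p * f1 = 0" using l5 by (simp add: algebra_simps)
  have z3: "f2 * p = 0 \<and> p * f2 = 0" using l7 by (simp add: algebra_simps)
  have z4: "f2 * q = 0 \<and> q * f2 = 0" using l8 by (simp add: algebra_simps)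
  have o1: "e1 * e2 = 0 \<and> e2 * e1 = 0" using orth1[of e1 q e2] orth2[of q e1 e2] l2 l4 qq by auto
  have o2: "e1 * f1 = 0 \<and> f1 * e1 = 0" using orth1[of e1 p f1] orth2[of p e1 f1] l1 l5 pp by auto
  have o3: "e1 * f2 = 0 \<and> f2 * e1 = 0" using orth1[of e1 p f2] orth2[of p e1 f2] l1 l7 pp by auto
  have o4: "e2 * f1 = 0 \<and> f1 * e2 = 0" using orth1[of e2 p f1] orth2[of p e2 f1] l3 l5 pp by auto
  have o5: "e2 * f2 = 0 \<and> f2 * e2 = 0" using orth1[of e2 p f2] orth2[of p e2 f2] l3 l7 pp by auto
  have o6: "f1 * f2 = 0 \<and> f2 * f1 = 0" using orth1[of f1 q f2] orth2[of q f1 f2] l6 l8 qq by auto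
  note F = pp qq e1e1 e2e2 f1f1 f2f2 l1 l2 l3 l6 z1 z2 z3 z4 o1 o2 o3 o4 o5 o6
  have J1: "J p q = perp f2" unfolding J_def f2_def M_def using join_perp[OF hp hq] .
  have J2: "J p (perp q) = perp f1" unfolding J_def f1_def M_def using join_perp[OF hp hq'] by simp
  have J3: "J (perp p) q = perp e2" unfolding J_def e2_def M_def using join_perp[OF hp' hq] by simp
  have J4: "J (perp p) (perp q) = perp e1" unfolding J_def e1_def M_def using join_perp[OF hp' hq'] by simp
  have e1P': "perp e1 \<in> P" and e2P': "perp e2 \<in> P" and f1P': "perp f1 \<in> P" and f2P': "perp f2 \<in> P"
    using perp_P e1P e2P f1P f2P by auto
  have s1: "M p (perp e2) = p - e2 \<and> p - e2 \<in> P" unfolding M_def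
    by (rule meet_calc[OF hp e2P']) (use F in \<open>simp_all add: perp_def algebra_simps\<close>)
  have rp_eq: "rp = p - e2 - e1"
  proof -
    have "M (p - e2) (perp e1) = p - e2 - e1 \<and> p - e2 - e1 \<in> P" unfolding M_def
      by (rule meet_calc) (use F s1 e1P' in \<open>simp_all add: perp_def algebra_simps\<close>)
    then show ?thesis unfolding rp_def J3 J4 using s1 by simp
  qed
  have s2: "M (perp p) (perp f2) = 1 - p - f2 \<and> 1 - p - f2 \<in> P" unfolding M_def
    by (rule meet_calc[OF hp' f2P']) (use F in \<open>simp_all add: perp_def algebra_simps\<close>)
  have rpp_eq: "rpp = 1 - p - f2 - f1"
  proof -
    have "M (1 - p - f2) (perp f1) = 1 - p - f2 - f1 \<and> 1 - p - f2 - f1 \<in> P" unfolding M_def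
      by (rule meet_calc) (use F s2 f1P' in \<open>simp_all add: perp_def algebra_simps\<close>)
    then show ?thesis unfolding rpp_def J1 J2 using s2 by simp
  qed
  have s3: "M q (perp f1) = q - f1 \<and> q - f1 \<in> P" unfolding M_def
    by (rule meet_calc[OF hq f1P']) (use F in \<open>simp_all add: perp_def algebra_simps\<close>)
  have rq_eq: "rq = q - f1 - e1"
  proof -
    have "M (q - f1) (perp e1) = q - f1 - e1 \<and> q - f1 - e1 \<in> P" unfolding M_def
      by (rule meet_calc) (use F s3 e1P' in \<open>simp_all add: perp_def algebra_simps\<close>)
    then show ?thesis unfolding rq_def J2 J4 using s3 by simp
  qed
  have s4: "M (perp q) (perp f2) = 1 - q - f2 \<and> 1 - q - f2 \<in> P" unfolding M_def
    by (rule meet_calc[OF hq' f2P']) (use F in \<open>simp_all add: perp_def algebra_simps\<close>)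
  have rqp_eq: "rqp = 1 - q - f2 - e2"
  proof -
    have "M (1 - q - f2) (perp e2) = 1 - q - f2 - e2 \<and> 1 - q - f2 - e2 \<in> P" unfolding M_def
      by (rule meet_calc) (use F s4 e2P' in \<open>simp_all add: perp_def algebra_simps\<close>)
    then show ?thesis unfolding rqp_def J1 J3 using s4 by simp
  qed
  have s5: "M (perp f2) (perp f1) = 1 - f2 - f1 \<and> 1 - f2 - f1 \<in> P" unfolding M_def
    by (rule meet_calc[OF f2P' f1P']) (use F in \<open>simp_all add: perp_def algebra_simps\<close>)
  have s6: "M (1 - f2 - f1) (perp e2) = 1 - f2 - f1 - e2 \<and> 1 - f2 - f1 - e2 \<in> P" unfolding M_def
    by (rule meet_calc) (use F s5 e2P' in \<open>simp_all add: perp_def algebra_simps\<close>)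
  have s7: "M (1 - f2 - f1 - e2) (perp e1) = 1 - f2 - f1 - e2 - e1 \<and> 1 - f2 - f1 - e2 - e1 \<in> P" unfolding M_def
    by (rule meet_calc) (use F s6 e1P' in \<open>simp_all add: perp_def algebra_simps\<close>)
  have r_eq: "r = 1 - f2 - f1 - e2 - e1" unfolding r_def J1 J2 J3 J4 using s5 s6 s7 by simp
  have rP: "r \<in> P" using s7 r_eq by simp
  have Mpr: "M p r = rp" unfolding M_def
    by (rule conjunct1[OF meet_calc[OF hp rP]]) (use F in \<open>simp_all add: r_eq rp_eq perp_def algebra_simps\<close>)
  have Mppr: "M (perp p) r = rpp" unfolding M_def
    by (rule conjunct1[OF meet_calc[OF hp' rP]]) (use F in \<open>simp_all add: r_eq rpp_eq perp_def algebra_simps\<close>)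
  have Mqr: "M q r = rq" unfolding M_def
    by (rule conjunct1[OF meet_calc[OF hq rP]]) (use F in \<open>simp_all add: r_eq rq_eq perp_def algebra_simps\<close>)
  have Mqpr: "M (perp q) r = rqp" unfolding M_def
    by (rule conjunct1[OF meet_calc[OF hq' rP]]) (use F in \<open>simp_all add: r_eq rqp_eq perp_def algebra_simps\<close>)
  have i: "p * q = q * p \<longleftrightarrow> r = 0"
  proof
    assume c: "p * q = q * p"
    have a1: "e1 = p * q" unfolding e1_def M_def using meet_comm_prod[OF hp hq c] .
    have a2: "e2 = p * (1 - q)" unfolding e2_def M_def perp_def
      using meet_comm_prod[OF hp hq'] c by (simp add: perp_def algebra_simps)
    have a3: "f1 = (1 - p) * q" unfolding f1_def M_def perp_def
      using meet_comm_prod[OF hp' hq] c by (simp add: perp_def algebra_simps)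
    have a4: "f2 = (1 - p) * (1 - q)" unfolding f2_def M_def perp_def
      using meet_comm_prod[OF hp' hq'] c by (simp add: perp_def algebra_simps)
    show "r = 0" unfolding r_eq a1 a2 a3 a4 using c by (simp add: algebra_simps)
  next
    assume r0: "r = 0"
    have "p * r = p - e2 - e1" using F by (simp add: r_eq algebra_simps)
    then have pe: "p = e1 + e2" using r0 by (simp add: algebra_simps)
    have "p * q = e1" "q * p = e1" unfolding pe using F by (simp_all add: algebra_simps)
    then show "p * q = q * p" by simp
  qed
  show ?thesis
    using F i Mpr Mppr Mqr Mqpr
    by (simp add: r_eq rp_eq rpp_eq rq_eq rqp_eq perp_def algebra_simps)
qed

end
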